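(* Let $f=\frac1{1-X}\in GF(2)[[X]]$ and for $h\in GF(2)[[X]]$ let $\alpha[h]:g\mapsto h+g$. Let $N$ be the group (under composition) generated by $\{\alpha[sf^m]\mid s\in GF(2),\ m\in\mathbb{Z}\}$. Then $N\cong\bigoplus_{\mathbb{Z}}GF^+(2)$.
   Context: $\bigoplus_{\mathbb{Z}}GF^+(2)$ denotes the group of functions $\mathfrak{r}:\mathbb{Z}\to GF(2)$ that are nonzero at only finitely many integers, under pointwise addition. *)

theory Defs
  imports "HOL-Library.Z2" "HOL-Computational_Algebra.Formal_Power_Series"
    "HOL-Algebra.Bij" "HOL-Algebra.Generated_Groups"
begin

definition f_ser :: "bit fps" where
  "f_ser = inverse (1 - fps_X)"

definition alpha :: "bit fps \<Rightarrow> bit fps \<Rightarrow> bit fps" where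
  "alpha h = (\<lambda>g. h + g)"

definition N_grp :: "(bit fps \<Rightarrow> bit fps) monoid" where
  "N_grp = (BijGroup (UNIV :: bit fps set))
     \<lparr>carrier := generate (BijGroup (UNIV :: bit fps set))
        {alpha (fps_const s * f_ser powi m) | s m. True}\<rparr>"

definition dsum_Z_GF2 :: "(int \<Rightarrow> bit) monoid" where
  "dsum_Z_GF2 = \<lparr>carrier = {r. finite {n. r n \<noteq> 0}},
     monoid.mult = (\<lambda>r t. (\<lambda>n. r n + t n)), one = (\<lambda>n. 0)\<rparr>"

end

theory Submission
  imports Defs
begin

abbreviation BG :: "(bit fps \<Rightarrow> bit fps) monoid" where
  "BG \<equiv> BijGroup (UNIV :: bit fps set)"

abbreviation gens :: "(bit fps \<Rightarrow> bit fps) set" where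
  "gens \<equiv> {alpha (fps_const s * f_ser powi m) | s m. True}"

lemma alpha_Bij: "alpha h \<in> Bij UNIV"
proof -
  have "bij_betw (\<lambda>g. h + g) UNIV UNIV"
    by (rule bij_betw_byWitness[where f' = "\<lambda>g. g - h"]) auto
  then show ?thesis by (simp add: Bij_def alpha_def)
qed

lemma mult_alpha: "alpha a \<otimes>\<^bsub>BG\<^esub> alpha b = alpha (a + b)"
  using alpha_Bij[of a] alpha_Bij[of b]
  by (auto simp: BijGroup_def compose_def alpha_def add.assoc)

lemma one_alpha: "\<one>\<^bsub>BG\<^esub> = alpha 0"
  by (auto simp: BijGroup_def alpha_def)

lemma add_self_bit: "(a::bit fps) + a = 0"
proof (rule fps_ext)
  fix n show "fps_nth (a + a) n = fps_nth 0 n" unfolding fps_add_nth by (cases "fps_nth a n") simp_all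
qed

lemma inv_alpha: "inv\<^bsub>BG\<^esub> (alpha a) = alpha a"
proof -
  have "alpha a \<otimes>\<^bsub>BG\<^esub> alpha a = \<one>\<^bsub>BG\<^esub>"
    by (simp add: mult_alpha one_alpha add_self_bit)
  moreover have "alpha a \<in> carrier BG" by (simp add: BijGroup_def alpha_Bij)
  ultimately show ?thesis
    using group.inv_equality[OF group_BijGroup] by metis
qed

lemma gen_sum:
  assumes "finite A"
  shows "alpha (\<Sum>n\<in>A. fps_const (c n) * f_ser powi n) \<in> generate BG gens"
  using assms
proof (induction A rule: finite_induct)
  case empty
  then show ?case using generate.one[of BG gens] by (simp add: one_alpha)
next
  case (insert x F)
  have "alpha (fps_const (c x) * f_ser powi x) \<in> generate BG gens"
    by (rule generate.incl) blast
  from generate.eng[OF this insert.IH] insert.hyps show ?case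
    by (simp add: mult_alpha)
qed

definition sig :: "(int \<Rightarrow> bit) \<Rightarrow> bit fps" where
  "sig r = (\<Sum>n\<in>{n. r n \<noteq> 0}. fps_const (r n) * f_ser powi n)"

lemma sig_super:
  assumes "finite A" "{n. r n \<noteq> 0} \<subseteq> A"
  shows "sig r = (\<Sum>n\<in>A. fps_const (r n) * f_ser powi n)"
  unfolding sig_def
  by (rule sum.mono_neutral_left) (use assms in auto)

lemma sig_add:
  assumes "finite {n. r n \<noteq> 0}" "finite {n. t n \<noteq> 0}"
  shows "sig (\<lambda>n. r n + t n) = sig r + sig t"
proof -
  let ?A = "{n. r n \<noteq> 0} \<union> {n. t n \<noteq> 0}"
  have fa: "finite ?A" using assms by auto
  have "sig (\<lambda>n. r n + t n) = (\<Sum>n\<in>?A. fps_const (r n + t n) * f_ser powi n)"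
    by (rule sig_super[OF fa]) auto
  also have "\<dots> = (\<Sum>n\<in>?A. fps_const (r n) * f_ser powi n) + (\<Sum>n\<in>?A. fps_const (t n) * f_ser powi n)"
    by (simp only: fps_const_add[symmetric] distrib_right sum.distrib)
  also have "\<dots> = sig r + sig t"
    using sig_super[OF fa, of r] sig_super[OF fa, of t] by auto
  finally show ?thesis .
qed

lemma gpow_nth:
  "(\<forall>j>k. fps_nth ((1 - fps_X :: 'a::comm_ring_1 fps)^k) (j) = 0) \<and> fps_nth ((1 - fps_X :: 'a fps)^k) (k) = (-1)^k"
proof (induction k)
  case 0
  then show ?case by auto
next
  case (Suc k)
  let ?p = "(1 - fps_X :: 'a fps)^k"
  have e: "(1 - fps_X :: 'a fps)^Suc k = ?p - fps_X * ?p"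
    by (simp add: algebra_simps)
  show ?case
  proof (intro conjI allI impI)
    fix j assume "j > Suc k"
    then show "fps_nth ((1 - fps_X :: 'a fps)^Suc k) (j) = 0"
      using Suc.IH unfolding e by simp
  next
    show "fps_nth ((1 - fps_X :: 'a fps)^Suc k) (Suc k) = (-1)^Suc k"
      using Suc.IH unfolding e by simp
  qed
qed

lemma gsum_nonzero:
  assumes "finite B" "B \<noteq> {}"
  shows "(\<Sum>k\<in>B. (1 - fps_X :: bit fps)^k) \<noteq> 0"
proof
  assume h: "(\<Sum>k\<in>B. (1 - fps_X :: bit fps)^k) = 0"
  let ?M = "Max B"
  have M: "?M \<in> B" using assms by simp
  have "fps_nth (\<Sum>k\<in>B. (1 - fps_X :: bit fps)^k) (?M) = (\<Sum>k\<in>B. fps_nth ((1 - fps_X :: bit fps)^k) (?M))"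
    by (simp add: fps_sum_nth)
  also have "\<dots> = fps_nth ((1 - fps_X :: bit fps)^?M) (?M) + (\<Sum>k\<in>B-{?M}. fps_nth ((1 - fps_X :: bit fps)^k) (?M))"
    by (rule sum.remove[OF assms(1) M])
  also have "(\<Sum>k\<in>B-{?M}. fps_nth ((1 - fps_X :: bit fps)^k) (?M)) = 0"
  proof (rule sum.neutral, intro ballI)
    fix k assume k: "k \<in> B - {?M}"
    then have "k \<le> ?M" using assms(1) by simp
    with k have "k < ?M" by auto
    then show "fps_nth ((1 - fps_X :: bit fps)^k) (?M) = 0" using gpow_nth[of k] by blast
  qed
  finally have "fps_nth (\<Sum>k\<in>B. (1 - fps_X :: bit fps)^k) (?M) = (-1)^?M"
    using conjunct2[OF gpow_nth[of ?M]] by (simp only: add_0_right)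
  moreover have "(-1::bit)^?M \<noteq> 0" by (rule power_not_zero) simp
  ultimately show False using h by (metis fps_zero_nth)
qed

lemma fg: "f_ser * (1 - fps_X) = 1"
  unfolding f_ser_def by (rule inverse_mult_eq_1) simp

lemma term_shift:
  assumes "n \<le> int K"
  shows "f_ser powi n * (1 - fps_X)^K = (1 - fps_X)^(nat (int K - n))"
proof (cases "n \<ge> 0")
  case True
  have K: "K = nat n + nat (int K - n)" using assms True by auto
  have "f_ser powi n * (1 - fps_X)^K = (f_ser * (1 - fps_X))^(nat n) * (1 - fps_X)^(nat (int K - n))"
    using True by (subst K) (simp add: power_int_def power_add power_mult_distrib)
  then show ?thesis by (simp add: fg)
next
  case False
  have inv: "inverse f_ser = 1 - fps_X"
    unfolding f_ser_def by (rule fps_inverse_idempotent) simp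
  have "nat (int K - n) = nat (-n) + K" using False by auto
  then show ?thesis using False by (simp add: power_int_def inv power_add)
qed

lemma indep:
  assumes "finite A" "(\<Sum>n\<in>A. f_ser powi n) = 0"
  shows "A = {}"
proof (rule ccontr)
  assume ne: "A \<noteq> {}"
  define K where "K = nat (Max A)"
  have le: "n \<le> int K" if "n \<in> A" for n
    using Max_ge[OF assms(1) that] unfolding K_def by auto
  have "0 = (\<Sum>n\<in>A. f_ser powi n) * (1 - fps_X)^K" using assms by simp
  also have "\<dots> = (\<Sum>n\<in>A. (1 - fps_X)^(nat (int K - n)))"
    by (simp add: sum_distrib_right term_shift le)
  also have "\<dots> = (\<Sum>k\<in>(\<lambda>n. nat (int K - n)) ` A. (1 - fps_X)^k)"
  proof (rule sum.reindex[symmetric, unfolded comp_def])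
    show "inj_on (\<lambda>n. nat (int K - n)) A"
      by (auto simp: inj_on_def dest!: le)
  qed
  finally show False using gsum_nonzero[of "(\<lambda>n. nat (int K - n)) ` A"] assms ne by auto
qed

lemma sig_zero:
  assumes "finite {n. r n \<noteq> 0}" "sig r = 0"
  shows "r = (\<lambda>n. 0)"
proof -
  have "sig r = (\<Sum>n\<in>{n. r n \<noteq> 0}. f_ser powi n)"
    unfolding sig_def by (rule sum.cong) auto
  then have "{n. r n \<noteq> 0} = {}" using indep assms by metis
  then show ?thesis by auto
qed

definition phi :: "(int \<Rightarrow> bit) \<Rightarrow> bit fps \<Rightarrow> bit fps" where
  "phi r = alpha (sig r)"

lemma group_dsum: "group dsum_Z_GF2"
proof (rule groupI)
  fix x y z
  assume "x \<in> carrier dsum_Z_GF2" "y \<in> carrier dsum_Z_GF2"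
  moreover have "{n. x n + y n \<noteq> 0} \<subseteq> {n. x n \<noteq> 0} \<union> {n. y n \<noteq> 0}" by auto
  ultimately show "x \<otimes>\<^bsub>dsum_Z_GF2\<^esub> y \<in> carrier dsum_Z_GF2"
    by (auto simp: dsum_Z_GF2_def simp del: bit_not_zero_iff elim!: finite_subset)
next
  show "\<one>\<^bsub>dsum_Z_GF2\<^esub> \<in> carrier dsum_Z_GF2" by (simp add: dsum_Z_GF2_def)
next
  fix x y z
  show "x \<otimes>\<^bsub>dsum_Z_GF2\<^esub> y \<otimes>\<^bsub>dsum_Z_GF2\<^esub> z = x \<otimes>\<^bsub>dsum_Z_GF2\<^esub> (y \<otimes>\<^bsub>dsum_Z_GF2\<^esub> z)"
    by (simp only: dsum_Z_GF2_def monoid.simps add.assoc)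
next
  fix x
  show "\<one>\<^bsub>dsum_Z_GF2\<^esub> \<otimes>\<^bsub>dsum_Z_GF2\<^esub> x = x"
    by (simp only: dsum_Z_GF2_def monoid.simps add_0_left)
next
  fix x assume x: "x \<in> carrier dsum_Z_GF2"
  have "x \<otimes>\<^bsub>dsum_Z_GF2\<^esub> x = \<one>\<^bsub>dsum_Z_GF2\<^esub>"
  proof -
    have "\<And>n. x n + x n = (0::bit)" by (case_tac "x n") simp_all
    then show ?thesis by (simp only: dsum_Z_GF2_def monoid.simps)
  qed
  with x show "\<exists>y\<in>carrier dsum_Z_GF2. y \<otimes>\<^bsub>dsum_Z_GF2\<^esub> x = \<one>\<^bsub>dsum_Z_GF2\<^esub>" by blast
qed

lemma carrier_N: "carrier N_grp = generate BG gens"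
  by (simp add: N_grp_def)

lemma mult_N: "monoid.mult N_grp = monoid.mult BG"
  by (simp add: N_grp_def)

lemma phi_in: "r \<in> carrier dsum_Z_GF2 \<Longrightarrow> phi r \<in> generate BG gens"
  unfolding phi_def sig_def dsum_Z_GF2_def by (rule gen_sum) simp

lemma phi_mult:
  assumes "r \<in> carrier dsum_Z_GF2" "t \<in> carrier dsum_Z_GF2"
  shows "phi (r \<otimes>\<^bsub>dsum_Z_GF2\<^esub> t) = phi r \<otimes>\<^bsub>BG\<^esub> phi t"
proof -
  have "phi (r \<otimes>\<^bsub>dsum_Z_GF2\<^esub> t) = alpha (sig (\<lambda>n. r n + t n))"
    by (simp add: phi_def dsum_Z_GF2_def)
  also have "\<dots> = alpha (sig r + sig t)"
    using assms by (subst sig_add) (auto simp: dsum_Z_GF2_def simp del: bit_not_zero_iff)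
  finally show ?thesis by (simp add: phi_def mult_alpha)
qed

lemma sig_single: "sig (\<lambda>n. if n = m then s else 0) = fps_const s * f_ser powi m"
  by (subst sig_super[of "{m}"]) auto

lemma gen_sub: "x \<in> generate BG gens \<Longrightarrow> x \<in> phi ` carrier dsum_Z_GF2"
proof (induction x rule: generate.induct)
  case one
  have "phi (\<lambda>n. 0) = \<one>\<^bsub>BG\<^esub>" by (simp add: phi_def sig_def one_alpha)
  moreover have "(\<lambda>n. 0) \<in> carrier dsum_Z_GF2" by (simp add: dsum_Z_GF2_def)
  ultimately show ?case by (metis image_eqI)
next
  case (incl h)
  then obtain s m where h: "h = alpha (fps_const s * f_ser powi m)" by blast
  have "phi (\<lambda>n. if n = m then s else 0) = h" by (simp add: phi_def sig_single h)
  moreover have "(\<lambda>n. if n = m then s else 0) \<in> carrier dsum_Z_GF2"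
    by (auto simp: dsum_Z_GF2_def simp del: bit_not_zero_iff intro: finite_subset[of _ "{m}"])
  ultimately show ?case by (metis image_eqI)
next
  case (inv h)
  then obtain s m where h: "h = alpha (fps_const s * f_ser powi m)" by blast
  have "phi (\<lambda>n. if n = m then s else 0) = inv\<^bsub>BG\<^esub> h" by (simp add: phi_def sig_single h inv_alpha)
  moreover have "(\<lambda>n. if n = m then s else 0) \<in> carrier dsum_Z_GF2"
    by (auto simp: dsum_Z_GF2_def simp del: bit_not_zero_iff intro: finite_subset[of _ "{m}"])
  ultimately show ?case by (metis image_eqI)
next
  case (eng h1 h2)
  then obtain r t where r: "r \<in> carrier dsum_Z_GF2" "h1 = phi r" and t: "t \<in> carrier dsum_Z_GF2" "h2 = phi t"
    by blast
  have "h1 \<otimes>\<^bsub>BG\<^esub> h2 = phi (r \<otimes>\<^bsub>dsum_Z_GF2\<^esub> t)" using phi_mult r t by simp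
  moreover have "r \<otimes>\<^bsub>dsum_Z_GF2\<^esub> t \<in> carrier dsum_Z_GF2"
    using r t group.subgroupE(4)[OF group_dsum] monoid.m_closed[OF group.is_monoid[OF group_dsum]] by blast
  ultimately show ?case by (metis image_eqI)
qed

lemma phi_inj: "inj_on phi (carrier dsum_Z_GF2)"
proof (rule inj_onI)
  fix r t assume r: "r \<in> carrier dsum_Z_GF2" and t: "t \<in> carrier dsum_Z_GF2" and e: "phi r = phi t"
  have "sig r = sig t" using fun_cong[OF e, of 0] by (simp add: phi_def alpha_def)
  have fr: "finite {n. r n \<noteq> 0}" and ft: "finite {n. t n \<noteq> 0}"
    using r t by (simp_all add: dsum_Z_GF2_def del: bit_not_zero_iff)
  have "sig (\<lambda>n. r n + t n) = 0"
    using sig_add[OF fr ft] \<open>sig r = sig t\<close> by (simp add: add_self_bit)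
  moreover have "finite {n. r n + t n \<noteq> 0}"
    by (rule finite_subset[OF _ finite_UnI[OF fr ft]]) auto
  ultimately have z: "(\<lambda>n. r n + t n) = (\<lambda>n. 0)" using sig_zero[of "\<lambda>n. r n + t n"] by blast
  show "r = t"
  proof
    fix n have "r n + t n = 0" using fun_cong[OF z, of n] by simp
    then show "r n = t n" by (cases "r n"; cases "t n") simp_all
  qed
qed

lemma phi_iso: "phi \<in> iso dsum_Z_GF2 N_grp"
proof (rule isoI)
  show "phi \<in> hom dsum_Z_GF2 N_grp"
  proof (rule homI)
    fix x assume "x \<in> carrier dsum_Z_GF2"
    then show "phi x \<in> carrier N_grp" unfolding carrier_N by (rule phi_in)
  next
    fix x y assume "x \<in> carrier dsum_Z_GF2" "y \<in> carrier dsum_Z_GF2"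
    then show "phi (x \<otimes>\<^bsub>dsum_Z_GF2\<^esub> y) = phi x \<otimes>\<^bsub>N_grp\<^esub> phi y"
      unfolding mult_N by (rule phi_mult)
  qed
  show "bij_betw phi (carrier dsum_Z_GF2) (carrier N_grp)"
    unfolding bij_betw_def carrier_N
    using phi_inj phi_in gen_sub by blast
qed

theorem proposition8p9:
  shows "N_grp \<cong> dsum_Z_GF2"
  using group.iso_sym[OF group_dsum is_isoI[OF phi_iso]] .

end
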